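(* Consider a bipartite system with OPF sets $\mathcal F_{d_{\sf A}}$, $\mathcal F_{d_{\sf B}}$, $\mathcal F_{d_{\sf A}d_{\sf B}}$ and affine representations $\Gamma^{d_{\sf A}}$, $\Gamma^{d_{\sf B}}$, $\Gamma^{d_{\sf A}d_{\sf B}}$. If the restriction of $\Gamma^{d_{\sf A}d_{\sf B}}$ to $\mathrm{SU}(d_{\sf A})\times\mathrm{SU}(d_{\sf B})$ (embedded as $U_{\sf A}\otimes U_{\sf B}$) contains a subrepresentation $1^{d_{\sf A}}\boxtimes1^{d_{\sf B}}$, then the composite system is holistic, i.e. not locally tomographic: for bases $\{F^i_{\sf A}\}$ of $V_{d_{\sf A}}$ and $\{F^j_{\sf B}\}$ of $V_{d_{\sf B}}$, $\{F^i_{\sf A}\star F^j_{\sf B}\}_{i,j}$ is not a basis of $V_{d_{\sf A}d_{\sf B}}$.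
   Context: An OPF on $\mathbb C^d$ is a function from rays of $\mathbb C^d$ to $[0,1]$; $\mathcal F_d$ contains the unit OPF ${\bf u}\equiv1$, satisfies (C1): $F\circ U:\psi\mapsto F(U\psi)$ is in $\mathcal F_d$ for $F\in\mathcal F_d$, $U\in\mathrm{SU}(d)$, and the Finiteness Principle: the real span $V_d$ of $\mathcal F_d$ is finite-dimensional. The associated representation $\bar\Gamma^d$ on $V_d$ is $\bar\Gamma^d(U)F=F\circ U$; it contains the trivial representation $1^d$ exactly once (spanned by ${\bf u}$), and the affine representation $\Gamma^d$ is defined by $\bar\Gamma^d=1^d\oplus\Gamma^d$. The product $\star:\mathcal F_{d_{\sf A}}\times\mathcal F_{d_{\sf B}}\to\mathcal F_{d_{\sf A}d_{\sf B}}$ is bilinear, satisfies ${\bf u}_{\sf A}\star{\bf u}_{\sf B}={\bf u}_{{\sf A}{\sf B}}$, and $(F_{\sf A}\star F_{\sf B})\circ(U_{\sf A}\otimes U_{\sf B})=(F_{\sf A}\circ U_{\sf A})\star(F_{\sf B}\circ U_{\sf B})$. $1^d$ is the trivial representation of $\mathrm{SU}(d)$ and $\boxtimes$ the outer tensor product. *)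

theory Defs
  imports "HOL-Analysis.Analysis" "HOL-Library.Function_Algebras"
begin

typedef ('d::finite) ray =
  "{S :: (complex ^ 'd) set. \<exists>\<psi>. \<psi> \<noteq> 0 \<and> S = {c *s \<psi> | c. c \<noteq> 0}}"
proof -
  have "(1::complex^'d) \<noteq> 0" by (simp add: vec_eq_iff)
  then show ?thesis by blast
qed

definition ray_act :: "complex ^ 'd ^ 'd \<Rightarrow> ('d::finite) ray \<Rightarrow> 'd ray" where
  "ray_act U r = Abs_ray ((\<lambda>\<psi>. U *v \<psi>) ` Rep_ray r)"

definition adjoint_mat :: "complex ^ 'n ^ 'm \<Rightarrow> complex ^ 'm ^ 'n" where
  "adjoint_mat U = (\<chi> i j. cnj (U $ j $ i))"

definition SU :: "(complex ^ 'd ^ 'd) set" where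
  "SU = {U. adjoint_mat U ** U = mat 1 \<and> det U = 1}"

text \<open>Kronecker product U_A (x) U_B acting on C^(d_A d_B) = C^{d_A} (x) C^{d_B}.\<close>
definition kron :: "complex ^ 'a ^ 'a \<Rightarrow> complex ^ 'b ^ 'b \<Rightarrow> complex ^ ('a \<times> 'b) ^ ('a \<times> 'b)" where
  "kron UA UB = (\<chi> p q. UA $ fst p $ fst q * UB $ snd p $ snd q)"

type_synonym 'd opf = "'d ray \<Rightarrow> real"

definition unit_opf :: "('d::finite) opf" ("\<u>") where
  "unit_opf = (\<lambda>_. 1)"

definition opf_comp :: "('d::finite) opf \<Rightarrow> complex ^ 'd ^ 'd \<Rightarrow> 'd opf" where
  "opf_comp F U = (\<lambda>r. F (ray_act U r))"

definition fscale :: "real \<Rightarrow> ('x \<Rightarrow> real) \<Rightarrow> ('x \<Rightarrow> real)" where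
  "fscale c f = (\<lambda>x. c * f x)"

definition fspan :: "('x \<Rightarrow> real) set \<Rightarrow> ('x \<Rightarrow> real) set" where
  "fspan = module.span fscale"

definition findependent :: "('x \<Rightarrow> real) set \<Rightarrow> bool" where
  "findependent S = (\<not> module.dependent fscale S)"

definition fsubspace :: "('x \<Rightarrow> real) set \<Rightarrow> bool" where
  "fsubspace = module.subspace fscale"

definition fbasis :: "('x \<Rightarrow> real) set \<Rightarrow> ('x \<Rightarrow> real) set \<Rightarrow> bool" where
  "fbasis S V = (S \<subseteq> V \<and> findependent S \<and> fspan S = V)"

text \<open>Standing assumptions on an OPF set F_d: OPFs take values in [0,1], the unit OPF
  belongs to F_d, (C1) invariance under SU(d), and the Finiteness Principle.\<close>
definition OPF_set :: "('d::finite) opf set \<Rightarrow> bool" where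
  "OPF_set F \<longleftrightarrow>
     (\<forall>G\<in>F. \<forall>r. 0 \<le> G r \<and> G r \<le> 1) \<and>
     \<u> \<in> F \<and>
     (\<forall>G\<in>F. \<forall>U\<in>SU. opf_comp G U \<in> F) \<and>
     (\<exists>B. finite B \<and> fspan B = fspan F)"

text \<open>The associated representation on V_d = span F_d contains the trivial representation
  exactly once (spanned by u): the SU(d)-invariant vectors of V_d are exactly span {u}.\<close>
definition trivial_once :: "('d::finite) opf set \<Rightarrow> bool" where
  "trivial_once F \<longleftrightarrow>
     {G \<in> fspan F. \<forall>U\<in>SU. opf_comp G U = G} = fspan {\<u>}"

text \<open>W carries the affine representation Gamma^d: W is an SU(d)-invariant subspace of V_d
  complementary to span {u}, so that the associated representation is 1^d (+) Gamma^d.\<close>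
definition affine_rep_space :: "('d::finite) opf set \<Rightarrow> 'd opf set \<Rightarrow> bool" where
  "affine_rep_space F W \<longleftrightarrow>
     fsubspace W \<and> W \<subseteq> fspan F \<and> \<u> \<notin> W \<and> fspan (insert \<u> W) = fspan F \<and>
     (\<forall>G\<in>W. \<forall>U\<in>SU. opf_comp G U \<in> W)"

definition OPF_product ::
  "('a::finite) opf set \<Rightarrow> ('b::finite) opf set \<Rightarrow> ('a \<times> 'b) opf set
   \<Rightarrow> ('a opf \<Rightarrow> 'b opf \<Rightarrow> ('a \<times> 'b) opf) \<Rightarrow> bool" where
  "OPF_product FA FB FAB star \<longleftrightarrow>
     (\<forall>F\<in>FA. \<forall>G\<in>FB. star F G \<in> FAB) \<and>
     (\<forall>F1\<in>fspan FA. \<forall>F2\<in>fspan FA. \<forall>G\<in>fspan FB. \<forall>a b.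
        star (\<lambda>r. a * F1 r + b * F2 r) G = (\<lambda>r. a * star F1 G r + b * star F2 G r)) \<and>
     (\<forall>F\<in>fspan FA. \<forall>G1\<in>fspan FB. \<forall>G2\<in>fspan FB. \<forall>a b.
        star F (\<lambda>r. a * G1 r + b * G2 r) = (\<lambda>r. a * star F G1 r + b * star F G2 r)) \<and>
     star \<u> \<u> = \<u> \<and>
     (\<forall>F\<in>FA. \<forall>G\<in>FB. \<forall>UA\<in>SU. \<forall>UB\<in>SU.
        opf_comp (star F G) (kron UA UB) = star (opf_comp F UA) (opf_comp G UB))"

end

theory Submission
  imports Defs
begin

instantiation "fun" :: (type, real_vector) real_vector
begin
definition scaleR_fun :: "real \<Rightarrow> ('a \<Rightarrow> 'b) \<Rightarrow> 'a \<Rightarrow> 'b" where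
  "scaleR_fun c f = (\<lambda>x. c *\<^sub>R f x)"
instance by standard (auto simp: scaleR_fun_def fun_eq_iff scaleR_add_right scaleR_add_left)
end

lemma fscale_eq: "fscale = (scaleR :: real \<Rightarrow> ('x\<Rightarrow>real) \<Rightarrow> _)"
  by (auto simp: fun_eq_iff fscale_def scaleR_fun_def)
lemma fspan_eq: "fspan = (span :: ('x\<Rightarrow>real) set \<Rightarrow> _)"
  unfolding fspan_def span_raw_def fscale_eq ..
lemma findep_eq: "findependent = (independent :: ('x\<Rightarrow>real) set \<Rightarrow> _)"
  unfolding findependent_def dependent_raw_def fscale_eq ..
lemma fsubspace_eq: "fsubspace = (subspace :: ('x\<Rightarrow>real) set \<Rightarrow> _)"
  unfolding fsubspace_def subspace_raw_def fscale_eq ..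

lemma lin_comb_fun: "(\<lambda>r. a * F1 r + b * F2 r) = a *\<^sub>R F1 + b *\<^sub>R F2"
  by (simp add: fun_eq_iff scaleR_fun_def)

lemma opf_comp_linear: "linear (\<lambda>F. opf_comp F U)"
  by (rule linearI) (auto simp: opf_comp_def fun_eq_iff scaleR_fun_def)

lemma opf_comp_lin: "opf_comp (c *\<^sub>R X + Y) U = c *\<^sub>R opf_comp X U + opf_comp Y U"
  by (auto simp: opf_comp_def fun_eq_iff scaleR_fun_def)

lemma opf_comp_0: "opf_comp 0 U = 0"
  by (auto simp: opf_comp_def fun_eq_iff)

lemma opf_comp_id: "opf_comp F (mat 1) = F"
  unfolding opf_comp_def ray_act_def by (simp add: Rep_ray_inverse)

lemma mat1_SU: "mat 1 \<in> SU"
proof -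
  have "adjoint_mat (mat 1 :: complex^'d^'d) = mat 1"
    by (simp add: adjoint_mat_def mat_def vec_eq_iff)
  then show ?thesis unfolding SU_def by (simp add: matrix_mul_lid det_I)
qed

lemma unit_ne0: "(\<u> :: 'd::finite opf) \<noteq> 0"
  by (auto simp: unit_opf_def fun_eq_iff)


theorem mainTheorem5:
  fixes FA :: "('a::finite) opf set" and FB :: "('b::finite) opf set"
    and FAB :: "('a \<times> 'b) opf set"
    and star :: "'a opf \<Rightarrow> 'b opf \<Rightarrow> ('a \<times> 'b) opf"
    and WA :: "'a opf set" and WB :: "'b opf set" and WAB :: "('a \<times> 'b) opf set"
    and BA :: "'a opf set" and BB :: "'b opf set"
  assumes "OPF_set FA" and "OPF_set FB" and "OPF_set FAB"
    and "trivial_once FA" and "trivial_once FB" and "trivial_once FAB"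
    and "affine_rep_space FA WA" and "affine_rep_space FB WB" and "affine_rep_space FAB WAB"
    and "OPF_product FA FB FAB star"
    and "\<exists>G\<in>WAB. G \<noteq> 0 \<and> (\<forall>UA\<in>SU. \<forall>UB\<in>SU. opf_comp G (kron UA UB) = G)"
    and "fbasis BA (fspan FA)" and "fbasis BB (fspan FB)"
  shows "\<not> (inj_on (\<lambda>(F, G). star F G) (BA \<times> BB) \<and>
             fbasis ((\<lambda>(F, G). star F G) ` (BA \<times> BB)) (fspan FAB))"
proof
  assume H: "inj_on (\<lambda>(F, G). star F G) (BA \<times> BB) \<and>
             fbasis ((\<lambda>(F, G). star F G) ` (BA \<times> BB)) (fspan FAB)"
  define s where "s = (\<lambda>(F, G). star F G)"
  define P where "P = BA \<times> BB"
  define T where "T = s ` P"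
  have inj: "inj_on s P" using H unfolding s_def P_def by simp
  have Tsub: "T \<subseteq> span FAB" and Tind: "independent T" and Tspan: "span T = span FAB"
    using H unfolding fbasis_def fspan_eq findep_eq s_def P_def T_def by auto
  have BAsub: "BA \<subseteq> span FA" and BAind: "independent BA" and BAspan: "span BA = span FA"
    using assms(12) unfolding fbasis_def fspan_eq findep_eq by auto
  have BBsub: "BB \<subseteq> span FB" and BBind: "independent BB" and BBspan: "span BB = span FB"
    using assms(13) unfolding fbasis_def fspan_eq findep_eq by auto
  have C1A: "\<forall>G\<in>FA. \<forall>U\<in>SU. opf_comp G U \<in> FA" and uA: "\<u> \<in> FA"
    using assms(1) unfolding OPF_set_def by auto
  have C1B: "\<forall>G\<in>FB. \<forall>U\<in>SU. opf_comp G U \<in> FB" and uB: "\<u> \<in> FB"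
    using assms(2) unfolding OPF_set_def by auto
  obtain B1 where B1: "finite B1" "span B1 = span FA"
    using assms(1) unfolding OPF_set_def fspan_eq by auto
  obtain B2 where B2: "finite B2" "span B2 = span FB"
    using assms(2) unfolding OPF_set_def fspan_eq by auto
  have finA: "finite BA" using independent_span_bound[OF B1(1) BAind] BAsub B1(2) by auto
  have finB: "finite BB" using independent_span_bound[OF B2(1) BBind] BBsub B2(2) by auto
  have finP: "finite P" unfolding P_def using finA finB by simp
  have finT: "finite T" unfolding T_def using finP by simp
  have triA: "{G \<in> span FA. \<forall>U\<in>SU. opf_comp G U = G} = span {\<u>}"
    using assms(4) unfolding trivial_once_def fspan_eq .
  have triB: "{G \<in> span FB. \<forall>U\<in>SU. opf_comp G U = G} = span {\<u>}"
    using assms(5) unfolding trivial_once_def fspan_eq .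
  have WABsub: "subspace WAB" and WABspan: "WAB \<subseteq> span FAB" and uW: "\<u> \<notin> WAB"
    using assms(9) unfolding affine_rep_space_def fspan_eq fsubspace_eq by auto
  have PR: "(\<forall>F1\<in>span FA. \<forall>F2\<in>span FA. \<forall>G\<in>span FB. \<forall>a b.
        star (\<lambda>r. a * F1 r + b * F2 r) G = (\<lambda>r. a * star F1 G r + b * star F2 G r)) \<and>
     (\<forall>F\<in>span FA. \<forall>G1\<in>span FB. \<forall>G2\<in>span FB. \<forall>a b.
        star F (\<lambda>r. a * G1 r + b * G2 r) = (\<lambda>r. a * star F G1 r + b * star F G2 r)) \<and>
     star \<u> \<u> = \<u> \<and>
     (\<forall>F\<in>FA. \<forall>G\<in>FB. \<forall>UA\<in>SU. \<forall>UB\<in>SU.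
        opf_comp (star F G) (kron UA UB) = star (opf_comp F UA) (opf_comp G UB))"
    using assms(10) unfolding OPF_product_def fspan_eq by auto
  have LA: "star (a *\<^sub>R F1 + b *\<^sub>R F2) G = a *\<^sub>R star F1 G + b *\<^sub>R star F2 G"
    if "F1 \<in> span FA" "F2 \<in> span FA" "G \<in> span FB" for F1 F2 G a b
    using PR that unfolding lin_comb_fun by auto
  have LB: "star F (a *\<^sub>R G1 + b *\<^sub>R G2) = a *\<^sub>R star F G1 + b *\<^sub>R star F G2"
    if "F \<in> span FA" "G1 \<in> span FB" "G2 \<in> span FB" for F G1 G2 a b
    using PR that unfolding lin_comb_fun by auto
  have uu: "star \<u> \<u> = \<u>" using PR by auto
  have EQ0: "opf_comp (star F G) (kron UA UB) = star (opf_comp F UA) (opf_comp G UB)"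
    if "F \<in> FA" "G \<in> FB" "UA \<in> SU" "UB \<in> SU" for F G UA UB
    using PR that by auto
  have uAs: "\<u> \<in> span FA" using uA by (rule span_base)
  have uBs: "\<u> \<in> span FB" using uB by (rule span_base)
  have sA0: "star 0 G = 0" if "G \<in> span FB" for G
    using LA[OF uAs uAs that, of 0 0] by simp
  have sB0: "star F 0 = 0" if "F \<in> span FA" for F
    using LB[OF that uBs uBs, of 0 0] by simp
  have sAs: "star (c *\<^sub>R F) G = c *\<^sub>R star F G" if "F \<in> span FA" "G \<in> span FB" for F G c
    using LA[OF that(1) that(1) that(2), of c 0] by simp
  have sBs: "star F (c *\<^sub>R G) = c *\<^sub>R star F G" if "F \<in> span FA" "G \<in> span FB" for F G c
    using LB[OF that(1) that(2) that(2), of c 0] by simp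
  have sAl: "star (c *\<^sub>R F1 + F2) G = c *\<^sub>R star F1 G + star F2 G"
    if "F1 \<in> span FA" "F2 \<in> span FA" "G \<in> span FB" for F1 F2 G c
    using LA[OF that, of c 1] by simp
  have sBl: "star F (c *\<^sub>R G1 + G2) = c *\<^sub>R star F G1 + star F G2"
    if "F \<in> span FA" "G1 \<in> span FB" "G2 \<in> span FB" for F G1 G2 c
    using LB[OF that, of c 1] by simp
  have sAd: "star (F1 - F2) G = star F1 G - star F2 G"
    if "F1 \<in> span FA" "F2 \<in> span FA" "G \<in> span FB" for F1 F2 G
    using LA[OF that, of 1 "-1"] by simp
  have sBd: "star F (G1 - G2) = star F G1 - star F G2"
    if "F \<in> span FA" "G1 \<in> span FB" "G2 \<in> span FB" for F G1 G2
    using LB[OF that, of 1 "-1"] by simp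
  have sAsum: "star (sum f I) G = (\<Sum>i\<in>I. star (f i) G)"
    if "finite I" "\<forall>i\<in>I. f i \<in> span FA" "G \<in> span FB" for f :: "'c \<Rightarrow> _" and I G
    using that
  proof (induction I rule: finite_induct)
    case empty then show ?case using sA0[of G] by (simp only: sum.empty)
  next
    case (insert x F)
    have "star (f x + sum f F) G = star (f x) G + star (sum f F) G"
      using sAl[of "f x" "sum f F" G 1] insert by (auto intro: span_sum)
    moreover have "star (sum f F) G = (\<Sum>i\<in>F. star (f i) G)" using insert by auto
    ultimately show ?case by (simp only: sum.insert[OF insert.hyps(1,2)])
  qed
  have sBsum: "star F (sum g I) = (\<Sum>i\<in>I. star F (g i))"
    if "finite I" "\<forall>i\<in>I. g i \<in> span FB" "F \<in> span FA" for g :: "'c \<Rightarrow> _" and I F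
    using that
  proof (induction I rule: finite_induct)
    case empty then show ?case using sB0[of F] by (simp only: sum.empty)
  next
    case (insert x I)
    have "star F (g x + sum g I) = star F (g x) + star F (sum g I)"
      using sBl[of F "g x" "sum g I" 1] insert by (auto intro: span_sum)
    moreover have "star F (sum g I) = (\<Sum>i\<in>I. star F (g i))" using insert by auto
    ultimately show ?case by (simp only: sum.insert[OF insert.hyps(1,2)])
  qed
  have compA: "opf_comp F U \<in> span FA" if "F \<in> span FA" "U \<in> SU" for F U
  proof -
    have "opf_comp F U \<in> (\<lambda>F. opf_comp F U) ` span FA" using that by blast
    also have "\<dots> = span ((\<lambda>F. opf_comp F U) ` FA)"
      by (rule span_linear_image[symmetric, OF opf_comp_linear])
    also have "\<dots> \<subseteq> span FA" using that C1A by (intro span_mono) auto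
    finally show ?thesis .
  qed
  have compB: "opf_comp F U \<in> span FB" if "F \<in> span FB" "U \<in> SU" for F U
  proof -
    have "opf_comp F U \<in> (\<lambda>F. opf_comp F U) ` span FB" using that by blast
    also have "\<dots> = span ((\<lambda>F. opf_comp F U) ` FB)"
      by (rule span_linear_image[symmetric, OF opf_comp_linear])
    also have "\<dots> \<subseteq> span FB" using that C1B by (intro span_mono) auto
    finally show ?thesis .
  qed
  have EQ1: "opf_comp (star F G) (kron UA UB) = star (opf_comp F UA) (opf_comp G UB)"
    if F: "F \<in> span FA" and G: "G \<in> FB" and UA: "UA \<in> SU" and UB: "UB \<in> SU" for F G UA UB
  proof -
    have GB: "G \<in> span FB" "opf_comp G UB \<in> span FB" using G UB C1B by (auto intro: span_base)
    have "F \<in> span FA \<and> opf_comp (star F G) (kron UA UB) = star (opf_comp F UA) (opf_comp G UB)"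
    proof (rule span_induct_alt[OF F])
      show "0 \<in> span FA \<and> opf_comp (star 0 G) (kron UA UB) = star (opf_comp 0 UA) (opf_comp G UB)"
        using GB sA0[OF GB(1)] sA0[OF GB(2)] by (simp only: opf_comp_0 span_zero simp_thms)
    next
      fix c x y assume x: "x \<in> FA" and y: "y \<in> span FA \<and>
        opf_comp (star y G) (kron UA UB) = star (opf_comp y UA) (opf_comp G UB)"
      have xs: "x \<in> span FA" using x by (rule span_base)
      have cx: "opf_comp x UA \<in> span FA" "opf_comp y UA \<in> span FA"
        using compA xs y UA by auto
      have "opf_comp (star (c *\<^sub>R x + y) G) (kron UA UB)
          = opf_comp (c *\<^sub>R star x G + star y G) (kron UA UB)"
        using sAl[OF xs _ GB(1)] y by simp
      also have "\<dots> = c *\<^sub>R star (opf_comp x UA) (opf_comp G UB) + star (opf_comp y UA) (opf_comp G UB)"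
        using EQ0[OF x G UA UB] y by (simp add: opf_comp_lin)
      also have "\<dots> = star (opf_comp (c *\<^sub>R x + y) UA) (opf_comp G UB)"
        using sAl[OF cx GB(2)] by (simp add: opf_comp_lin)
      finally show "c *\<^sub>R x + y \<in> span FA \<and>
        opf_comp (star (c *\<^sub>R x + y) G) (kron UA UB) = star (opf_comp (c *\<^sub>R x + y) UA) (opf_comp G UB)"
        using xs y by (auto intro: span_add span_scale)
    qed
    then show ?thesis by simp
  qed
  have EQ2: "opf_comp (star F G) (kron UA UB) = star (opf_comp F UA) (opf_comp G UB)"
    if F: "F \<in> span FA" and G: "G \<in> span FB" and UA: "UA \<in> SU" and UB: "UB \<in> SU" for F G UA UB
  proof -
    have FA': "opf_comp F UA \<in> span FA" using compA F UA by auto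
    have "G \<in> span FB \<and> opf_comp (star F G) (kron UA UB) = star (opf_comp F UA) (opf_comp G UB)"
    proof (rule span_induct_alt[OF G])
      show "0 \<in> span FB \<and> opf_comp (star F 0) (kron UA UB) = star (opf_comp F UA) (opf_comp 0 UB)"
        using F FA' sB0[OF F] sB0[OF FA'] by (simp only: opf_comp_0 span_zero simp_thms)
    next
      fix c x y assume x: "x \<in> FB" and y: "y \<in> span FB \<and>
        opf_comp (star F y) (kron UA UB) = star (opf_comp F UA) (opf_comp y UB)"
      have xs: "x \<in> span FB" using x by (rule span_base)
      have cx: "opf_comp x UB \<in> span FB" "opf_comp y UB \<in> span FB"
        using compB xs y UB by auto
      have "opf_comp (star F (c *\<^sub>R x + y)) (kron UA UB)
          = opf_comp (c *\<^sub>R star F x + star F y) (kron UA UB)"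
        using sBl[OF F xs] y by simp
      also have "\<dots> = c *\<^sub>R star (opf_comp F UA) (opf_comp x UB) + star (opf_comp F UA) (opf_comp y UB)"
        using EQ1[OF F x UA UB] y by (simp add: opf_comp_lin)
      also have "\<dots> = star (opf_comp F UA) (opf_comp (c *\<^sub>R x + y) UB)"
        using sBl[OF FA' cx] by (simp add: opf_comp_lin)
      finally show "c *\<^sub>R x + y \<in> span FB \<and>
        opf_comp (star F (c *\<^sub>R x + y)) (kron UA UB) = star (opf_comp F UA) (opf_comp (c *\<^sub>R x + y) UB)"
        using xs y by (auto intro: span_add span_scale)
    qed
    then show ?thesis by simp
  qed
  have K: "\<forall>p\<in>P. c p = 0" if "(\<Sum>p\<in>P. c p *\<^sub>R s p) = 0" for c
  proof -
    define u where "u = (\<lambda>t. c (inv_into P s t))"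
    have "(\<Sum>t\<in>T. u t *\<^sub>R t) = (\<Sum>p\<in>P. u (s p) *\<^sub>R s p)"
      unfolding T_def by (simp add: sum.reindex[OF inj] comp_def)
    also have "\<dots> = (\<Sum>p\<in>P. c p *\<^sub>R s p)"
      by (rule sum.cong) (auto simp: u_def inv_into_f_f[OF inj])
    finally have "(\<Sum>t\<in>T. u t *\<^sub>R t) = 0" using that by simp
    then have "\<forall>t\<in>T. u t = 0" using Tind dependent_finite[OF finT] by blast
    then show ?thesis unfolding T_def u_def by (auto simp: inv_into_f_f[OF inj])
  qed
  have K1: "\<forall>g\<in>BB. D g = 0"
    if D: "\<forall>g\<in>BB. D g \<in> span FA" and S: "(\<Sum>g\<in>BB. star (D g) g) = 0" for D
  proof -
    have "\<forall>g\<in>BB. \<exists>r. D g = (\<Sum>f\<in>BA. r f *\<^sub>R f)"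
      using D span_finite[OF finA] BAspan by (metis (no_types, lifting) image_iff)
    then obtain d where d: "\<forall>g\<in>BB. D g = (\<Sum>f\<in>BA. d g f *\<^sub>R f)"
      by (rule bchoice[elim_format]) blast
    have "\<forall>g\<in>BB. star (D g) g = (\<Sum>f\<in>BA. d g f *\<^sub>R star f g)"
    proof
      fix g assume g: "g \<in> BB"
      have gs: "g \<in> span FB" using g BBsub by auto
      have "star (D g) g = (\<Sum>f\<in>BA. star (d g f *\<^sub>R f) g)"
        using d g sAsum[OF finA _ gs, of "\<lambda>f. d g f *\<^sub>R f"] BAsub
        by (auto intro: span_scale)
      also have "\<dots> = (\<Sum>f\<in>BA. d g f *\<^sub>R star f g)"
        by (rule sum.cong) (use BAsub gs sAs in auto)
      finally show "star (D g) g = (\<Sum>f\<in>BA. d g f *\<^sub>R star f g)" .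
    qed
    then have "(\<Sum>g\<in>BB. \<Sum>f\<in>BA. d g f *\<^sub>R star f g) = 0" using S by simp
    then have "(\<Sum>f\<in>BA. \<Sum>g\<in>BB. d g f *\<^sub>R star f g) = 0" by (simp add: sum.swap[of _ BB])
    then have "(\<Sum>(f,g)\<in>BA\<times>BB. d g f *\<^sub>R star f g) = 0" by (simp add: sum.cartesian_product)
    then have "(\<Sum>p\<in>P. (\<lambda>(f,g). d g f) p *\<^sub>R s p) = 0"
      unfolding P_def s_def by (simp add: case_prod_unfold)
    then have "\<forall>p\<in>P. (\<lambda>(f,g). d g f) p = 0" by (rule K)
    then have "\<forall>g\<in>BB. \<forall>f\<in>BA. d g f = 0" unfolding P_def by auto
    then show ?thesis using d by simp
  qed
  have K2: "X = 0" if X: "X \<in> span FB" and S: "star \<u> X = 0" for X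
  proof -
    obtain k where k: "X = (\<Sum>g\<in>BB. k g *\<^sub>R g)"
      using X span_finite[OF finB] BBspan by auto
    have "star \<u> X = (\<Sum>g\<in>BB. star \<u> (k g *\<^sub>R g))"
      unfolding k using sBsum[OF finB _ uAs, of "\<lambda>g. k g *\<^sub>R g"] BBsub
      by (auto intro: span_scale)
    also have "\<dots> = (\<Sum>g\<in>BB. star (k g *\<^sub>R \<u>) g)"
      by (rule sum.cong) (use BBsub uAs sAs sBs in auto)
    finally have "(\<Sum>g\<in>BB. star (k g *\<^sub>R \<u>) g) = 0" using S by simp
    then have "\<forall>g\<in>BB. k g *\<^sub>R (\<u>::'a opf) = 0"
      using K1[of "\<lambda>g. k g *\<^sub>R \<u>"] uAs by (auto intro: span_scale)
    then have "\<forall>g\<in>BB. k g = 0" using unit_ne0 by auto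
    then show ?thesis using k by simp
  qed
  obtain G where G: "G \<in> WAB" "G \<noteq> 0" and Ginv: "\<forall>UA\<in>SU. \<forall>UB\<in>SU. opf_comp G (kron UA UB) = G"
    using assms(11) by blast
  have "G \<in> span T" using G WABspan Tspan by auto
  then obtain u where "G = (\<Sum>t\<in>T. u t *\<^sub>R t)" using span_finite[OF finT] by auto
  also have "\<dots> = (\<Sum>p\<in>P. u (s p) *\<^sub>R s p)"
    unfolding T_def by (simp add: sum.reindex[OF inj] comp_def)
  also have "\<dots> = (\<Sum>(f,g)\<in>BA\<times>BB. u (star f g) *\<^sub>R star f g)"
    unfolding P_def s_def by (simp add: case_prod_unfold)
  also have "\<dots> = (\<Sum>g\<in>BB. \<Sum>f\<in>BA. u (star f g) *\<^sub>R star f g)"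
    by (simp add: sum.cartesian_product[symmetric] sum.swap[of _ BA])
  finally have G1: "G = (\<Sum>g\<in>BB. \<Sum>f\<in>BA. u (star f g) *\<^sub>R star f g)" .
  define A where "A = (\<lambda>g. \<Sum>f\<in>BA. u (star f g) *\<^sub>R f)"
  have Ain: "\<forall>g. A g \<in> span FA" unfolding A_def using BAsub
    by (intro allI span_sum span_scale) auto
  have G2: "G = (\<Sum>g\<in>BB. star (A g) g)"
    unfolding G1
  proof (rule sum.cong)
    fix g assume g: "g \<in> BB"
    have gs: "g \<in> span FB" using g BBsub by auto
    have "star (A g) g = (\<Sum>f\<in>BA. star (u (star f g) *\<^sub>R f) g)"
      unfolding A_def using sAsum[OF finA _ gs, of "\<lambda>f. u (star f g) *\<^sub>R f"] BAsub
      by (auto intro: span_scale)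
    also have "\<dots> = (\<Sum>f\<in>BA. u (star f g) *\<^sub>R star f g)"
      by (rule sum.cong) (use BAsub gs sAs in auto)
    finally show "(\<Sum>f\<in>BA. u (star f g) *\<^sub>R star f g) = star (A g) g" by simp
  qed simp
  have Ainv: "\<forall>g\<in>BB. opf_comp (A g) UA = A g" if UA: "UA \<in> SU" for UA
  proof -
    have "opf_comp G (kron UA (mat 1)) = (\<Sum>g\<in>BB. opf_comp (star (A g) g) (kron UA (mat 1)))"
      unfolding G2 by (rule linear_sum[OF opf_comp_linear])
    also have "\<dots> = (\<Sum>g\<in>BB. star (opf_comp (A g) UA) g)"
    proof (rule sum.cong)
      fix g assume g: "g \<in> BB"
      then have gs: "g \<in> span FB" using BBsub by auto
      show "opf_comp (star (A g) g) (kron UA (mat 1)) = star (opf_comp (A g) UA) g"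
        using EQ2[OF spec[OF Ain, of g] gs UA mat1_SU] by (simp only: opf_comp_id)
    qed simp
    finally have c1: "opf_comp G (kron UA (mat 1)) = (\<Sum>g\<in>BB. star (opf_comp (A g) UA) g)" .
    have "(\<Sum>g\<in>BB. star (opf_comp (A g) UA) g) = (\<Sum>g\<in>BB. star (A g) g)"
      using c1[unfolded Ginv[rule_format, OF UA mat1_SU]] G2 by metis
    then have e0: "(\<Sum>g\<in>BB. star (opf_comp (A g) UA) g - star (A g) g) = 0"
      by (simp only: sum_subtractf diff_self)
    have d: "(\<Sum>g\<in>BB. star (opf_comp (A g) UA - A g) g)
        = (\<Sum>g\<in>BB. star (opf_comp (A g) UA) g - star (A g) g)"
      by (rule sum.cong) (use sAd compA Ain UA BBsub in auto)
    have S: "(\<Sum>g\<in>BB. star (opf_comp (A g) UA - A g) g) = 0" using d e0 by (simp only:)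
    have "\<forall>g\<in>BB. opf_comp (A g) UA - A g = 0"
      by (rule K1[OF _ S]) (use compA Ain UA in \<open>auto intro: span_diff\<close>)
    then show ?thesis by simp
  qed
  have "\<forall>g\<in>BB. \<exists>k. A g = k *\<^sub>R \<u>"
  proof
    fix g assume g: "g \<in> BB"
    have "A g \<in> span {\<u>}" unfolding triA[symmetric] using Ain Ainv g by auto
    then show "\<exists>k. A g = k *\<^sub>R \<u>" by (auto simp: span_singleton)
  qed
  then obtain a where a: "\<forall>g\<in>BB. A g = a g *\<^sub>R \<u>" by (rule bchoice[elim_format]) blast
  define Hf where "Hf = (\<Sum>g\<in>BB. a g *\<^sub>R g)"
  have Hin: "Hf \<in> span FB" unfolding Hf_def using BBsub by (intro span_sum span_scale) auto
  have G3: "G = star \<u> Hf"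
  proof -
    have "G = (\<Sum>g\<in>BB. star (a g *\<^sub>R \<u>) g)" unfolding G2 using a by simp
    also have "\<dots> = (\<Sum>g\<in>BB. star \<u> (a g *\<^sub>R g))"
      by (rule sum.cong) (use BBsub uAs sAs sBs in auto)
    also have "\<dots> = star \<u> Hf"
    proof -
      have pre: "\<forall>i\<in>BB. a i *\<^sub>R i \<in> span FB" using BBsub by (auto intro: span_scale)
      show ?thesis unfolding Hf_def by (rule sym, rule sBsum[OF finB pre uAs])
    qed
    finally show ?thesis .
  qed
  have Hinv: "opf_comp Hf UB = Hf" if UB: "UB \<in> SU" for UB
  proof -
    have "star \<u> (opf_comp Hf UB) = opf_comp G (kron (mat 1) UB)"
      unfolding G3 using EQ2[OF uAs Hin mat1_SU UB] by (simp add: opf_comp_id)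
    also have "\<dots> = star \<u> Hf" using Ginv UB mat1_SU G3 by auto
    finally have "star \<u> (opf_comp Hf UB - Hf) = 0"
      using sBd[OF uAs compB[OF Hin UB] Hin] by simp
    then show ?thesis using K2[of "opf_comp Hf UB - Hf"] compB[OF Hin UB] Hin
      by (auto intro: span_diff)
  qed
  have "Hf \<in> span {\<u>}" unfolding triB[symmetric] using Hin Hinv by auto
  then obtain b where b: "Hf = b *\<^sub>R \<u>" by (auto simp: span_singleton)
  have "G = b *\<^sub>R \<u>" unfolding G3 b using sBs[OF uAs uBs] uu by simp
  then have "b \<noteq> 0" using G(2) by auto
  have "\<u> = inverse b *\<^sub>R G" using \<open>G = b *\<^sub>R \<u>\<close> \<open>b \<noteq> 0\<close> by simp
  moreover have "inverse b *\<^sub>R G \<in> WAB" by (rule subspace_scale[OF WABsub G(1)])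
  ultimately have "\<u> \<in> WAB" by (simp only:)
  then show False using uW by simp
qed

end
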